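(* Let $G=(V,E_r,E_b)$ be a two-colored graph that contains no monochromatic $K_3$ and no monochromatic $P_3$ as induced subgraphs. Then every vertex of $G$ is incident with at most two blue edges and with at most two red edges.
   Context: A two-colored graph $G=(V,E_r,E_b)$ is a finite simple undirected graph whose edge set is partitioned into red edges $E_r$ and blue edges $E_b$. A monochromatic $K_3$ is a triangle all three of whose edges have the same color. A monochromatic $P_3$ is an induced path on three vertices $u,v,w$ (edges $\{u,v\},\{v,w\}$, non-edge $\{u,w\}$) whose two edges have the same color. *)

theory Defs
  imports Main
begin

definition two_colored_graph :: "'a set \<Rightarrow> ('a \<Rightarrow> 'a \<Rightarrow> bool) \<Rightarrow> ('a \<Rightarrow> 'a \<Rightarrow> bool) \<Rightarrow> bool" where
  "two_colored_graph V R B \<longleftrightarrow> finite V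
     \<and> (\<forall>u v. R u v \<longrightarrow> u \<in> V \<and> v \<in> V \<and> u \<noteq> v \<and> R v u)
     \<and> (\<forall>u v. B u v \<longrightarrow> u \<in> V \<and> v \<in> V \<and> u \<noteq> v \<and> B v u)
     \<and> (\<forall>u v. \<not> (R u v \<and> B u v))"

definition adj :: "('a \<Rightarrow> 'a \<Rightarrow> bool) \<Rightarrow> ('a \<Rightarrow> 'a \<Rightarrow> bool) \<Rightarrow> 'a \<Rightarrow> 'a \<Rightarrow> bool" where
  "adj R B u v \<longleftrightarrow> R u v \<or> B u v"

definition has_mono_K3 :: "('a \<Rightarrow> 'a \<Rightarrow> bool) \<Rightarrow> bool" where
  "has_mono_K3 C \<longleftrightarrow> (\<exists>u v w. C u v \<and> C v w \<and> C u w)"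

definition has_mono_P3 :: "('a \<Rightarrow> 'a \<Rightarrow> bool) \<Rightarrow> ('a \<Rightarrow> 'a \<Rightarrow> bool) \<Rightarrow> ('a \<Rightarrow> 'a \<Rightarrow> bool) \<Rightarrow> bool" where
  "has_mono_P3 R B C \<longleftrightarrow> (\<exists>u v w. C u v \<and> C v w \<and> u \<noteq> w \<and> \<not> adj R B u w)"

end

theory Submission
  imports Defs
begin

lemma three_elems:
  assumes "2 < card S"
  shows "\<exists>a b c. a \<in> S \<and> b \<in> S \<and> c \<in> S \<and> a \<noteq> b \<and> a \<noteq> c \<and> b \<noteq> c"
proof -
  from assms have "Suc (Suc (Suc 0)) \<le> card S" by simp
  then show ?thesis by (auto simp: card_le_Suc_iff)
qed

lemma no_three:
  assumes sym: "\<And>u v. D u v \<Longrightarrow> D v u" and symC: "\<And>u v. C u v \<Longrightarrow> C v u"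
    and k3C: "\<not> (\<exists>u v w. C u v \<and> C v w \<and> C u w)"
    and k3D: "\<not> (\<exists>u v w. D u v \<and> D v w \<and> D u w)"
    and p3: "\<not> (\<exists>u v w. C u v \<and> C v w \<and> u \<noteq> w \<and> \<not> (C u w \<or> D u w))"
    and a: "C v a" and b: "C v b" and c: "C v c"
    and d: "a \<noteq> b" "a \<noteq> c" "b \<noteq> c"
  shows False
proof -
  have "D x y" if "C v x" "C v y" "x \<noteq> y" for x y
  proof -
    have "C x y \<or> D x y" using p3 that symC by blast
    moreover have "\<not> C x y" using k3C that by blast
    ultimately show ?thesis by blast
  qed
  then have "D a b" "D b c" "D a c" using a b c d by auto
  then show False using k3D by blast
qed

theorem lemma4:
  fixes V :: "'a set" and R B :: "'a \<Rightarrow> 'a \<Rightarrow> bool"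
  assumes "two_colored_graph V R B"
    and "\<not> has_mono_K3 R" and "\<not> has_mono_K3 B"
    and "\<not> has_mono_P3 R B R" and "\<not> has_mono_P3 R B B"
  shows "\<forall>v\<in>V. card {w \<in> V. B v w} \<le> 2 \<and> card {w \<in> V. R v w} \<le> 2"
proof (intro ballI conjI)
  fix v assume "v \<in> V"
  have sR: "\<And>u v. R u v \<Longrightarrow> R v u" and sB: "\<And>u v. B u v \<Longrightarrow> B v u"
    using assms(1) unfolding two_colored_graph_def by auto
  show "card {w \<in> V. B v w} \<le> 2"
  proof (rule ccontr)
    assume "\<not> ?thesis"
    then obtain a b c where "a \<in> {w \<in> V. B v w}" "b \<in> {w \<in> V. B v w}" "c \<in> {w \<in> V. B v w}"
      "a \<noteq> b" "a \<noteq> c" "b \<noteq> c" using three_elems[of "{w \<in> V. B v w}"] by auto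
    then show False
      using no_three[of R B, OF sR sB] assms(2-5)
      unfolding has_mono_K3_def has_mono_P3_def adj_def by blast
  qed
  show "card {w \<in> V. R v w} \<le> 2"
  proof (rule ccontr)
    assume "\<not> ?thesis"
    then obtain a b c where "a \<in> {w \<in> V. R v w}" "b \<in> {w \<in> V. R v w}" "c \<in> {w \<in> V. R v w}"
      "a \<noteq> b" "a \<noteq> c" "b \<noteq> c" using three_elems[of "{w \<in> V. R v w}"] by auto
    then show False
      using no_three[of B R, OF sB sR] assms(2-5)
      unfolding has_mono_K3_def has_mono_P3_def adj_def by blast
  qed
qed

end
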